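(* Let $G$ be a finite simple graph with a fixed total order on $E(G)$ and fix $\pi\in B_G$. Write $\nabla_G(\pi)=\{e_1<\dots<e_m\}$. Then \[\sum_{\sigma\in B_G,\ \sigma\supseteq\pi}(-1)^{\ell(\sigma)}=(-1)^{|C(G)|}\cdot N,\] where $N$ is the number of inclusion-wise maximal elements $T\in B_G$ with $T\supseteq\pi$ such that (if $m\ge1$) $e_1\notin T$, and for every $j>1$ with $e_j\in T$ there exists $i<j$ with $e_i\notin T$ such that $e_j$ lies on the unique cycle of $\mathcal{G}(T\cup\{e_i\})$ (the fundamental cycle of $e_i$ with respect to $T$).
   Context: A broken circuit is the edge set of a cycle of $G$ with its smallest edge removed; $B_G$ is the set of all $S\subseteq E(G)$ containing no broken circuit (each such $S$ is the edge set of a forest). For $S\subseteq E(G)$, $\mathcal{G}(S)=(V(G),S)$, $\ell(S)$ is the number of connected components of $\mathcal{G}(S)$, and $\nabla_G(S)$ is the set of edges of $G$ whose endpoints lie in different connected components of $\mathcal{G}(S)$. $|C(G)|$ is the number of connected components of $G$. *)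

theory Defs
  imports Main
begin

definition simple_graph :: "'a set \<Rightarrow> 'a set set \<Rightarrow> bool" where
  "simple_graph V E \<longleftrightarrow> finite V \<and> (\<forall>e\<in>E. e \<subseteq> V \<and> card e = 2)"

text \<open>A fixed total order on E(G), given by an injective ranking: e < f iff rk e < rk f.\<close>
definition edge_order :: "'a set set \<Rightarrow> ('a set \<Rightarrow> nat) \<Rightarrow> bool" where
  "edge_order E rk \<longleftrightarrow> inj_on rk E"

definition is_cycle :: "'a set \<Rightarrow> 'a set set \<Rightarrow> 'a set set \<Rightarrow> bool" where
  "is_cycle V E C \<longleftrightarrow> (\<exists>vs. length vs \<ge> 3 \<and> distinct vs \<and> set vs \<subseteq> V \<and>
      C = {{vs ! i, vs ! ((i + 1) mod length vs)} | i. i < length vs} \<and> C \<subseteq> E)"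

definition min_edge :: "('a set \<Rightarrow> nat) \<Rightarrow> 'a set set \<Rightarrow> 'a set" where
  "min_edge rk C = (THE e. e \<in> C \<and> (\<forall>f\<in>C. rk e \<le> rk f))"

definition broken_circuit :: "'a set \<Rightarrow> 'a set set \<Rightarrow> ('a set \<Rightarrow> nat) \<Rightarrow> 'a set set \<Rightarrow> bool" where
  "broken_circuit V E rk D \<longleftrightarrow> (\<exists>C. is_cycle V E C \<and> D = C - {min_edge rk C})"

text \<open>B_G: subsets of E(G) containing no broken circuit.\<close>
definition NBC :: "'a set \<Rightarrow> 'a set set \<Rightarrow> ('a set \<Rightarrow> nat) \<Rightarrow> 'a set set set" where
  "NBC V E rk = {S. S \<subseteq> E \<and> (\<forall>D. broken_circuit V E rk D \<longrightarrow> \<not> D \<subseteq> S)}"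

definition conn :: "'a set \<Rightarrow> 'a set set \<Rightarrow> ('a \<times> 'a) set" where
  "conn V S = {(u, v). u \<in> V \<and> v \<in> V \<and> (u, v) \<in> ({(x, y). {x, y} \<in> S})\<^sup>*}"

text \<open>\<ell>(S): number of connected components of (V,S).\<close>
definition ncomp :: "'a set \<Rightarrow> 'a set set \<Rightarrow> nat" where
  "ncomp V S = card (V // conn V S)"

definition nabla :: "'a set \<Rightarrow> 'a set set \<Rightarrow> 'a set set \<Rightarrow> 'a set set" where
  "nabla V E S = {e \<in> E. \<exists>u v. e = {u, v} \<and> (u, v) \<notin> conn V S}"

definition max_NBC_above :: "'a set \<Rightarrow> 'a set set \<Rightarrow> ('a set \<Rightarrow> nat) \<Rightarrow> 'a set set \<Rightarrow> 'a set set \<Rightarrow> bool" where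
  "max_NBC_above V E rk \<pi> T \<longleftrightarrow> T \<in> NBC V E rk \<and> \<pi> \<subseteq> T \<and>
     (\<forall>T'. T' \<in> NBC V E rk \<and> \<pi> \<subseteq> T' \<and> T \<subseteq> T' \<longrightarrow> T' = T)"

definition on_fund_cycle :: "'a set \<Rightarrow> 'a set set \<Rightarrow> 'a set set \<Rightarrow> 'a set \<Rightarrow> 'a set \<Rightarrow> bool" where
  "on_fund_cycle V E T f e \<longleftrightarrow> (\<exists>C. is_cycle V E C \<and> C \<subseteq> T \<union> {f} \<and> e \<in> C)"

definition good_T :: "'a set \<Rightarrow> 'a set set \<Rightarrow> ('a set \<Rightarrow> nat) \<Rightarrow> 'a set set \<Rightarrow> 'a set set \<Rightarrow> bool" where
  "good_T V E rk \<pi> T \<longleftrightarrow>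
     (nabla V E \<pi> \<noteq> {} \<longrightarrow> min_edge rk (nabla V E \<pi>) \<notin> T) \<and>
     (\<forall>ej \<in> nabla V E \<pi>. ej \<noteq> min_edge rk (nabla V E \<pi>) \<and> ej \<in> T \<longrightarrow>
        (\<exists>ei \<in> nabla V E \<pi>. rk ei < rk ej \<and> ei \<notin> T \<and> on_fund_cycle V E T ei ej))"

end

theory Submission
  imports Defs
begin


definition rel :: "'a set set \<Rightarrow> ('a \<times> 'a) set" where
  "rel S = {(x, y). {x, y} \<in> S}"

definition linked :: "'a set set \<Rightarrow> 'a set \<Rightarrow> bool" where
  "linked S e \<longleftrightarrow> (\<forall>u v. e = {u, v} \<longrightarrow> (u, v) \<in> (rel S)\<^sup>*)"

lemma rel_conv: "(rel S)\<inverse> = rel S"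
  by (auto simp: rel_def insert_commute)

lemma rel_sym: "(x, y) \<in> (rel S)\<^sup>* \<Longrightarrow> (y, x) \<in> (rel S)\<^sup>*"
  using rtrancl_converseI[of x y "rel S"] by (simp add: rel_conv)

lemma rel_mono: "S \<subseteq> T \<Longrightarrow> (rel S)\<^sup>* \<subseteq> (rel T)\<^sup>*"
  by (rule rtrancl_mono) (auto simp: rel_def)

lemma linked_iff: "linked S {u, v} \<longleftrightarrow> (u, v) \<in> (rel S)\<^sup>*"
  unfolding linked_def by (auto simp: doubleton_eq_iff intro: rel_sym)

lemma linked_mono: "linked S e \<Longrightarrow> S \<subseteq> T \<Longrightarrow> linked T e"
  using rel_mono unfolding linked_def by blast

lemma linked_mem: "e \<in> S \<Longrightarrow> linked S e"
  unfolding linked_def rel_def by auto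

lemma linked_insert:
  assumes l: "linked S m"
  shows "(rel (insert m S))\<^sup>* = (rel S)\<^sup>*"
proof (rule equalityI)
  have "rel (insert m S) \<subseteq> (rel S)\<^sup>*"
  proof
    fix p assume "p \<in> rel (insert m S)"
    then obtain x y where p: "p = (x, y)" "{x, y} \<in> insert m S" by (auto simp: rel_def)
    show "p \<in> (rel S)\<^sup>*"
    proof (cases "{x, y} = m")
      case True thus ?thesis using l p unfolding linked_def by auto
    next
      case False thus ?thesis using p by (auto simp: rel_def)
    qed
  qed
  hence "(rel (insert m S))\<^sup>* \<subseteq> ((rel S)\<^sup>*)\<^sup>*" by (rule rtrancl_mono)
  thus "(rel (insert m S))\<^sup>* \<subseteq> (rel S)\<^sup>*" by simp
next
  show "(rel S)\<^sup>* \<subseteq> (rel (insert m S))\<^sup>*" by (rule rel_mono) auto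
qed

lemma path_distinct:
  "(u, v) \<in> (rel S)\<^sup>* \<Longrightarrow> \<exists>vs. length vs > 0 \<and> vs ! 0 = u \<and> vs ! (length vs - 1) = v \<and> distinct vs
     \<and> (\<forall>i. Suc i < length vs \<longrightarrow> {vs ! i, vs ! Suc i} \<in> S)"
proof (induction rule: rtrancl_induct)
  case base
  show ?case by (intro exI[of _ "[u]"]) auto
next
  case (step y z)
  then obtain vs where vs: "length vs > 0" "vs ! 0 = u" "vs ! (length vs - 1) = y" "distinct vs"
    "\<forall>i. Suc i < length vs \<longrightarrow> {vs ! i, vs ! Suc i} \<in> S" by blast
  from step(2) have yz: "{y, z} \<in> S" by (simp add: rel_def)
  show ?case
  proof (cases "z \<in> set vs")
    case True
    then obtain j where j: "j < length vs" "vs ! j = z" by (auto simp: in_set_conv_nth)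
    show ?thesis
      by (rule exI[of _ "take (Suc j) vs"]) (use vs j in auto)
  next
    case False
    let ?ws = "vs @ [z]"
    have "\<forall>i. Suc i < length ?ws \<longrightarrow> {?ws ! i, ?ws ! Suc i} \<in> S"
    proof (intro allI impI)
      fix i assume i: "Suc i < length ?ws"
      show "{?ws ! i, ?ws ! Suc i} \<in> S"
      proof (cases "Suc i < length vs")
        case True thus ?thesis using vs(5) by (simp add: nth_append)
      next
        case False
        hence "i = length vs - 1" using i by simp
        thus ?thesis using vs(1,3) yz False by (simp add: nth_append)
      qed
    qed
    thus ?thesis using vs False
      by (intro exI[of _ ?ws]) (auto simp: nth_append)
  qed
qed

lemma modsuc: assumes "i < n" shows "(i + 1) mod n = (if Suc i < n then Suc i else 0)"
proof (cases "Suc i < n")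
  case False
  hence "Suc i = n" using assms by simp
  thus ?thesis by simp
qed simp

lemma aux2: assumes "3 \<le> n" "i < n" "a = Suc i mod n" "Suc a mod n = i" shows False
proof (cases "Suc i < n")
  case True
  hence a: "a = Suc i" using assms by simp
  show False
  proof (cases "Suc (Suc i) < n")
    case True thus False using assms a by simp
  next
    case False
    hence "Suc (Suc i) = n" using \<open>Suc i < n\<close> by simp
    thus False using assms a by auto
  qed
next
  case False
  hence "Suc i = n" using assms by simp
  hence "a = 0" using assms by simp
  hence "i = 1" using assms by simp
  thus False using \<open>Suc i = n\<close> assms by simp
qed

lemma aux_ne: assumes "i < n" "Suc d < n" shows "(i + 1 + d) mod n \<noteq> i"
proof (cases "i + 1 + d < n")
  case True thus ?thesis by simp
next
  case False
  hence "(i + 1 + d) mod n = (i + 1 + d - n) mod n" by (simp add: le_mod_geq)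
  also have "\<dots> = i + 1 + d - n" using assms by simp
  finally show ?thesis using assms False by simp
qed

lemma cycle_linked:
  assumes cyc: "is_cycle V E C" and fC: "f \<in> C"
  shows "linked (C - {f}) f"
proof -
  obtain vs where vs: "length vs \<ge> 3" "distinct vs" "set vs \<subseteq> V"
    "C = {{vs ! i, vs ! ((i + 1) mod length vs)} | i. i < length vs}" "C \<subseteq> E"
    using cyc unfolding is_cycle_def by blast
  define n where "n = length vs"
  obtain i where i: "i < n" "f = {vs ! i, vs ! ((i + 1) mod n)}" using fC vs(4) n_def by auto
  let ?R = "rel (C - {f})"
  have edge_in: "(vs ! a, vs ! ((a + 1) mod n)) \<in> ?R" if a: "a < n" "a \<noteq> i" for a
  proof -
    have inC: "{vs ! a, vs ! ((a + 1) mod n)} \<in> C" using vs(4) a n_def by auto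
    have ne: "{vs ! a, vs ! ((a + 1) mod n)} \<noteq> f"
    proof
      assume eq: "{vs ! a, vs ! ((a + 1) mod n)} = f"
      have n0: "0 < n" using i by simp
      have lt: "(a + 1) mod n < n" "(i + 1) mod n < n" using n0 by auto
      show False
      proof (cases "vs ! a = vs ! i")
        case True
        hence "a = i" using vs(2) a i n_def nth_eq_iff_index_eq by metis
        thus False using a by simp
      next
        case False
        hence "vs ! a = vs ! ((i + 1) mod n) \<and> vs ! ((a + 1) mod n) = vs ! i"
          using eq i(2) by (auto simp: doubleton_eq_iff)
        hence "a = (i + 1) mod n" "(a + 1) mod n = i"
          using vs(2) a i lt n_def nth_eq_iff_index_eq by metis+
        thus False using aux2[of n i a] i vs(1) n_def by simp
      qed
    qed
    show ?thesis using inC ne by (simp add: rel_def)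
  qed
  have walk: "(vs ! ((i + 1) mod n), vs ! ((i + 1 + d) mod n)) \<in> ?R\<^sup>*" if "d < n" for d
    using that
  proof (induction d)
    case 0 thus ?case by simp
  next
    case (Suc d)
    have IH: "(vs ! ((i + 1) mod n), vs ! ((i + 1 + d) mod n)) \<in> ?R\<^sup>*" using Suc by simp
    define a where "a = (i + 1 + d) mod n"
    have an: "a < n" using Suc by (simp add: a_def)
    have ai: "a \<noteq> i" using aux_ne[OF i(1) Suc.prems] by (simp add: a_def)
    have "(a + 1) mod n = (i + 1 + Suc d) mod n" unfolding a_def by (simp add: mod_Suc_eq)
    hence "(vs ! ((i + 1 + d) mod n), vs ! ((i + 1 + Suc d) mod n)) \<in> ?R"
      using edge_in[OF an ai] by (simp add: a_def)
    thus ?case using IH by (meson rtrancl_into_rtrancl)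
  qed
  have "(i + 1 + (n - 1)) mod n = i" using i by simp
  hence "(vs ! ((i + 1) mod n), vs ! i) \<in> ?R\<^sup>*" using walk[of "n - 1"] i by simp
  hence "(vs ! i, vs ! ((i + 1) mod n)) \<in> ?R\<^sup>*" by (rule rel_sym)
  thus ?thesis using i(2) by (simp add: linked_iff)
qed



definition cl :: "'a set \<Rightarrow> 'a set set \<Rightarrow> 'a \<Rightarrow> 'a set" where
  "cl V S x = {y \<in> V. (x, y) \<in> (rel S)\<^sup>*}"

lemma conn_rel: "conn V S = {(u, v). u \<in> V \<and> v \<in> V \<and> (u, v) \<in> (rel S)\<^sup>*}"
  by (simp add: conn_def rel_def)

lemma quot_eq: "V // conn V S = cl V S ` V"
proof -
  have "\<And>x. x \<in> V \<Longrightarrow> conn V S `` {x} = cl V S x" by (auto simp: conn_rel cl_def)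
  moreover have "V // conn V S = (\<lambda>x. conn V S `` {x}) ` V" by (auto simp: quotient_def)
  ultimately show ?thesis by simp
qed

lemma ncomp_cl: "ncomp V S = card (cl V S ` V)"
  by (simp add: ncomp_def quot_eq)

lemma cl_self: "x \<in> V \<Longrightarrow> x \<in> cl V S x" by (simp add: cl_def)

lemma cl_same: "y \<in> cl V S x \<Longrightarrow> cl V S y = cl V S x"
  unfolding cl_def by (auto intro: rtrancl_trans rel_sym)

lemma rt_insert:
  "(x, y) \<in> (rel (insert {a, b} S))\<^sup>* \<Longrightarrow> (x, y) \<in> (rel S)\<^sup>* \<or> ((x, a) \<in> (rel S)\<^sup>* \<and> (b, y) \<in> (rel S)\<^sup>*)
     \<or> ((x, b) \<in> (rel S)\<^sup>* \<and> (a, y) \<in> (rel S)\<^sup>*)"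
proof (induction rule: rtrancl_induct)
  case base thus ?case by simp
next
  case (step y z)
  let ?R = "(rel S)\<^sup>*"
  from step(2) have "{y, z} = {a, b} \<or> {y, z} \<in> S" by (simp add: rel_def)
  thus ?case
  proof
    assume "{y, z} \<in> S"
    hence yz: "(y, z) \<in> ?R" by (auto simp: rel_def)
    from step(3) show ?case using yz by (meson rtrancl_trans)
  next
    assume "{y, z} = {a, b}"
    hence "(y = a \<and> z = b) \<or> (y = b \<and> z = a)" by (auto simp: doubleton_eq_iff)
    thus ?case
    proof (elim disjE conjE)
      assume e: "y = a" "z = b"
      show ?case using step(3)
      proof (elim disjE conjE)
        assume "(x, y) \<in> ?R" thus ?case using e by simp
      next
        assume "(x, a) \<in> ?R" thus ?case using e by simp
      next
        assume "(x, b) \<in> ?R" "(a, y) \<in> ?R"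
        hence "(x, z) \<in> ?R" using e by simp
        thus ?case by simp
      qed
    next
      assume e: "y = b" "z = a"
      show ?case using step(3)
      proof (elim disjE conjE)
        assume "(x, y) \<in> ?R" thus ?case using e by simp
      next
        assume "(x, a) \<in> ?R" "(b, y) \<in> ?R"
        hence "(x, z) \<in> ?R" using e by simp
        thus ?case by simp
      next
        assume "(x, b) \<in> ?R" thus ?case using e by simp
      qed
    qed
  qed
qed

lemma ncomp_insert:
  assumes fin: "finite V" and ab: "a \<in> V" "b \<in> V" "(a, b) \<notin> (rel S)\<^sup>*"
  shows "ncomp V S = Suc (ncomp V (insert {a, b} S))"
proof -
  let ?S' = "insert {a, b} S"
  let ?R = "(rel S)\<^sup>*"
  define A where "A = cl V S a"
  define B where "B = cl V S b"
  have sub: "?R \<subseteq> (rel ?S')\<^sup>*" by (rule rel_mono) auto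
  have ab': "(a, b) \<in> (rel ?S')\<^sup>*" by (auto simp: rel_def)
  have cl'_eq: "cl V ?S' x = (if x \<in> A \<union> B then A \<union> B else cl V S x)" if x: "x \<in> V" for x
  proof (cases "x \<in> A \<union> B")
    case True
    have "cl V ?S' x = A \<union> B"
    proof (rule set_eqI)
      fix y
      show "y \<in> cl V ?S' x \<longleftrightarrow> y \<in> A \<union> B"
      proof
        assume "y \<in> cl V ?S' x"
        hence y: "y \<in> V" "(x, y) \<in> (rel ?S')\<^sup>*" by (auto simp: cl_def)
        have xab: "(a, x) \<in> ?R \<or> (b, x) \<in> ?R" using True unfolding A_def B_def cl_def by auto
        have "(a, y) \<in> ?R \<or> (b, y) \<in> ?R"
          using rt_insert[OF y(2)]
        proof (elim disjE conjE)
          assume "(x, y) \<in> ?R" thus ?thesis using xab by (meson rtrancl_trans)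
        next
          assume "(b, y) \<in> ?R" thus ?thesis by simp
        next
          assume "(a, y) \<in> ?R" thus ?thesis by simp
        qed
        thus "y \<in> A \<union> B" using y(1) unfolding A_def B_def cl_def by auto
      next
        assume "y \<in> A \<union> B"
        hence "y \<in> V" "(a, y) \<in> (rel ?S')\<^sup>* \<or> (b, y) \<in> (rel ?S')\<^sup>*"
          using sub unfolding A_def B_def cl_def by auto
        moreover have "(x, a) \<in> (rel ?S')\<^sup>* \<or> (x, b) \<in> (rel ?S')\<^sup>*"
          using True sub unfolding A_def B_def cl_def by (auto intro: rel_sym)
        moreover have "(b, a) \<in> (rel ?S')\<^sup>*" using ab' by (rule rel_sym)
        ultimately have "(x, y) \<in> (rel ?S')\<^sup>*" using ab'
          by (metis rtrancl_trans)
        thus "y \<in> cl V ?S' x" using \<open>y \<in> V\<close> unfolding cl_def by simp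
      qed
    qed
    thus ?thesis using True by simp
  next
    case False
    have "cl V ?S' x = cl V S x"
    proof (rule set_eqI)
      fix y
      show "y \<in> cl V ?S' x \<longleftrightarrow> y \<in> cl V S x"
      proof
        assume "y \<in> cl V ?S' x"
        hence y: "y \<in> V" "(x, y) \<in> (rel ?S')\<^sup>*" by (auto simp: cl_def)
        have "(x, a) \<notin> ?R" "(x, b) \<notin> ?R" using False x ab unfolding A_def B_def cl_def
          by (auto intro: rel_sym)
        thus "y \<in> cl V S x" using rt_insert[OF y(2)] y(1) by (auto simp: cl_def)
      next
        assume "y \<in> cl V S x" thus "y \<in> cl V ?S' x" using sub by (auto simp: cl_def)
      qed
    qed
    thus ?thesis using False by simp
  qed
  let ?Q = "cl V S ` V"
  have AQ: "A \<in> ?Q" "B \<in> ?Q" using ab by (auto simp: A_def B_def)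
  have aA: "a \<in> A" "b \<in> B" using ab by (auto simp: A_def B_def cl_def)
  have AB: "A \<noteq> B" using aA ab(3) by (auto simp: A_def B_def cl_def intro: rel_sym)
  have Q': "cl V ?S' ` V = insert (A \<union> B) (?Q - {A, B})"
  proof (rule set_eqI)
    fix c
    show "c \<in> cl V ?S' ` V \<longleftrightarrow> c \<in> insert (A \<union> B) (?Q - {A, B})"
    proof
      assume "c \<in> cl V ?S' ` V"
      then obtain x where x: "x \<in> V" "c = cl V ?S' x" by auto
      show "c \<in> insert (A \<union> B) (?Q - {A, B})"
      proof (cases "x \<in> A \<union> B")
        case True thus ?thesis using x cl'_eq by simp
      next
        case False
        hence "cl V S x \<noteq> A" "cl V S x \<noteq> B" using cl_self[OF x(1), of S] by auto
        thus ?thesis using x cl'_eq False by auto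
      qed
    next
      assume "c \<in> insert (A \<union> B) (?Q - {A, B})"
      thus "c \<in> cl V ?S' ` V"
      proof
        assume "c = A \<union> B"
        thus ?thesis using cl'_eq[OF ab(1)] aA ab(1) by (metis UnI1 image_eqI)
      next
        assume "c \<in> ?Q - {A, B}"
        then obtain x where x: "x \<in> V" "c = cl V S x" "c \<noteq> A" "c \<noteq> B" by auto
        have "x \<notin> A \<union> B"
        proof
          assume "x \<in> A \<union> B"
          thus False using cl_same[of x V S a] cl_same[of x V S b] x unfolding A_def B_def by auto
        qed
        thus ?thesis using cl'_eq[OF x(1)] x by auto
      qed
    qed
  qed
  have notin: "A \<union> B \<notin> ?Q - {A, B}"
  proof
    assume "A \<union> B \<in> ?Q - {A, B}"
    then obtain x where x: "x \<in> V" "A \<union> B = cl V S x" by auto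
    hence "a \<in> cl V S x" "b \<in> cl V S x" using aA by auto
    hence "cl V S x = A" "cl V S x = B" using cl_same unfolding A_def B_def by metis+
    thus False using AB by simp
  qed
  have finQ: "finite ?Q" using fin by simp
  have "card (cl V ?S' ` V) = Suc (card (?Q - {A, B}))" using Q' notin finQ by simp
  also have "card (?Q - {A, B}) = card ?Q - 2" using AQ AB finQ by (simp add: card_Diff_subset)
  finally have "card (cl V ?S' ` V) = Suc (card ?Q - 2)" .
  moreover have "card ?Q \<ge> 2"
  proof -
    have "card {A, B} \<le> card ?Q" using AQ finQ by (intro card_mono) auto
    thus ?thesis using AB by simp
  qed
  ultimately show ?thesis by (simp add: ncomp_cl)
qed



locale gsetting =
  fixes V :: "'a set" and E :: "'a set set" and rk :: "'a set \<Rightarrow> nat"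
  assumes sg: "simple_graph V E" and inj: "inj_on rk E"
begin

lemma finV: "finite V" using sg by (simp add: simple_graph_def)
lemma edge_sub: "e \<in> E \<Longrightarrow> e \<subseteq> V" using sg by (simp add: simple_graph_def)
lemma edge_card: "e \<in> E \<Longrightarrow> card e = 2" using sg by (simp add: simple_graph_def)

lemma finE: "finite E"
proof -
  have "E \<subseteq> Pow V" using edge_sub by auto
  thus ?thesis using finV by (meson finite_Pow_iff finite_subset)
qed

lemma edge_obtain:
  assumes "e \<in> E"
  obtains u v where "e = {u, v}" "u \<noteq> v" "u \<in> V" "v \<in> V"
  using card_2_iff[of e] edge_card[OF assms] edge_sub[OF assms] by auto

lemma in_nabla:
  assumes e: "e \<in> E"
  shows "e \<in> nabla V E S \<longleftrightarrow> \<not> linked S e"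
proof -
  obtain u v where uv: "e = {u, v}" "u \<noteq> v" "u \<in> V" "v \<in> V" using edge_obtain[OF e] .
  have "e \<in> nabla V E S \<longleftrightarrow> (\<exists>a b. {u, v} = {a, b} \<and> (a, b) \<notin> conn V S)"
    using e uv by (simp add: nabla_def)
  also have "\<dots> \<longleftrightarrow> (u, v) \<notin> (rel S)\<^sup>*"
    using uv by (auto simp: doubleton_eq_iff conn_rel intro: rel_sym)
  also have "\<dots> \<longleftrightarrow> \<not> linked S e" using uv by (simp add: linked_iff)
  finally show ?thesis .
qed

lemma NBC_sub: "S \<in> NBC V E rk \<Longrightarrow> S \<subseteq> E" by (simp add: NBC_def)

lemma NBC_mono: "T \<in> NBC V E rk \<Longrightarrow> S \<subseteq> T \<Longrightarrow> S \<in> NBC V E rk"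
  unfolding NBC_def by blast

lemma cycle_notNBC: "is_cycle V E C \<Longrightarrow> C \<subseteq> S \<Longrightarrow> S \<notin> NBC V E rk"
  unfolding NBC_def broken_circuit_def by blast

lemma min_edge_eq:
  assumes "e \<in> A" "\<forall>f\<in>A. rk e \<le> rk f" "A \<subseteq> E"
  shows "min_edge rk A = e"
  unfolding min_edge_def
proof (rule the_equality)
  show "e \<in> A \<and> (\<forall>f\<in>A. rk e \<le> rk f)" using assms by simp
next
  fix x assume x: "x \<in> A \<and> (\<forall>f\<in>A. rk x \<le> rk f)"
  hence "rk x = rk e" using assms by (meson antisym)
  thus "x = e" using inj assms x by (meson inj_onD subsetD)
qed

lemma min_edge_prop:
  assumes "finite A" "A \<noteq> {}" "A \<subseteq> E"
  shows "min_edge rk A \<in> A \<and> (\<forall>f\<in>A. rk (min_edge rk A) \<le> rk f)"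
proof -
  have "Min (rk ` A) \<in> rk ` A" using assms by simp
  then obtain e where e: "e \<in> A" "rk e = Min (rk ` A)" by auto
  have "\<forall>f\<in>A. rk e \<le> rk f" using e assms by simp
  thus ?thesis using min_edge_eq[OF e(1) _ assms(3)] e by simp
qed

lemma path_cycle:
  assumes SE: "S \<subseteq> E" and eE: "e \<in> E" and eS: "e \<notin> S" and l: "linked S e"
  shows "\<exists>C. is_cycle V E C \<and> C \<subseteq> insert e S \<and> e \<in> C"
proof -
  obtain u v where uv: "e = {u, v}" "u \<noteq> v" "u \<in> V" "v \<in> V" using edge_obtain[OF eE] .
  have "(u, v) \<in> (rel S)\<^sup>*" using l uv by (simp add: linked_iff)
  then obtain vs where vs: "length vs > 0" "vs ! 0 = u" "vs ! (length vs - 1) = v" "distinct vs"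
     "\<forall>i. Suc i < length vs \<longrightarrow> {vs ! i, vs ! Suc i} \<in> S"
    using path_distinct[of u v S] by blast
  define n where "n = length vs"
  have n2: "n \<ge> 2"
  proof (rule ccontr)
    assume "\<not> n \<ge> 2"
    hence "n = 1" using vs(1) n_def by linarith
    thus False using vs(2,3) uv(2) n_def by simp
  qed
  have n3: "n \<ge> 3"
  proof (rule ccontr)
    assume "\<not> n \<ge> 3"
    hence "n = 2" using n2 by simp
    hence "{vs ! 0, vs ! 1} \<in> S" using vs(5) n_def by auto
    moreover have "vs ! 1 = v" using vs(3) \<open>n = 2\<close> n_def by simp
    ultimately show False using eS uv vs(2) by simp
  qed
  define C where "C = {{vs ! i, vs ! ((i + 1) mod length vs)} | i. i < length vs}"
  have CS: "C \<subseteq> insert e S"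
  proof
    fix c assume "c \<in> C"
    then obtain i where i: "i < n" "c = {vs ! i, vs ! ((i + 1) mod n)}" by (auto simp: C_def n_def)
    show "c \<in> insert e S"
    proof (cases "Suc i < n")
      case True
      hence "(i + 1) mod n = Suc i" by simp
      thus ?thesis using i vs(5) True n_def by simp
    next
      case False
      hence si: "Suc i = n" using i by simp
      hence "(i + 1) mod n = 0" by simp
      have "i = n - 1" using si by simp
      hence "c = {vs ! (n - 1), vs ! 0}" using i \<open>(i + 1) mod n = 0\<close> by simp
      hence "c = e" using vs(2,3) uv(1) n_def by (simp add: insert_commute)
      thus ?thesis by simp
    qed
  qed
  have eC: "e \<in> C"
  proof -
    have "(n - 1 + 1) mod n = 0" using n3 by simp
    hence "{vs ! (n - 1), vs ! ((n - 1 + 1) mod n)} = e" using vs(2,3) uv(1) n_def by auto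
    moreover have "n - 1 < n" using n3 by simp
    ultimately show ?thesis unfolding C_def n_def by blast
  qed
  have CE: "C \<subseteq> E" using CS SE eE by auto
  have setV: "set vs \<subseteq> V"
  proof
    fix x assume "x \<in> set vs"
    then obtain i where i: "i < n" "x = vs ! i" by (auto simp: in_set_conv_nth n_def)
    hence "{vs ! i, vs ! ((i + 1) mod n)} \<in> C" unfolding C_def n_def by blast
    hence "{vs ! i, vs ! ((i + 1) mod n)} \<subseteq> V" using CE edge_sub by blast
    thus "x \<in> V" using i by simp
  qed
  have "is_cycle V E C" unfolding is_cycle_def
    using n3 vs(4) setV CE C_def n_def by blast
  thus ?thesis using CS eC by blast
qed

lemma extend_fail:
  assumes sB: "\<sigma> \<in> NBC V E rk" and eE: "e \<in> E" and nl: "\<not> linked \<sigma> e"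
    and nB: "insert e \<sigma> \<notin> NBC V E rk"
  shows "\<exists>m\<in>E. rk m < rk e \<and> \<not> linked \<sigma> m"
proof -
  have "insert e \<sigma> \<subseteq> E" using sB eE NBC_sub by auto
  then obtain D where D: "broken_circuit V E rk D" "D \<subseteq> insert e \<sigma>"
    using nB unfolding NBC_def by blast
  then obtain C where C: "is_cycle V E C" "D = C - {min_edge rk C}"
    unfolding broken_circuit_def by blast
  define m where "m = min_edge rk C"
  have eD: "e \<in> D"
  proof (rule ccontr)
    assume "e \<notin> D"
    hence "D \<subseteq> \<sigma>" using D by auto
    thus False using sB D(1) unfolding NBC_def by blast
  qed
  have CE: "C \<subseteq> E" using C(1) unfolding is_cycle_def by blast
  have Cne: "C \<noteq> {}" using eD C by auto
  have finC: "finite C" using CE finE finite_subset by blast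
  have mC: "m \<in> C" "\<forall>f\<in>C. rk m \<le> rk f" using min_edge_prop[OF finC Cne CE] m_def by auto
  have eC: "e \<in> C" "e \<noteq> m" using eD C m_def by auto
  have "rk m \<le> rk e" using mC eC by simp
  moreover have "rk m \<noteq> rk e" using inj mC(1) eC CE by (metis inj_onD subsetD)
  ultimately have lt: "rk m < rk e" by simp
  have "\<not> linked \<sigma> m"
  proof
    assume lm: "linked \<sigma> m"
    have "linked (C - {e}) e" using cycle_linked[OF C(1) eC(1)] .
    moreover have "C - {e} \<subseteq> insert m \<sigma>" using D C m_def by auto
    ultimately have "linked (insert m \<sigma>) e" by (rule linked_mono)
    hence "linked \<sigma> e" using linked_insert[OF lm] unfolding linked_def by simp
    thus False using nl by simp
  qed
  thus ?thesis using lt mC CE by blast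
qed

end



lemma ofc_mono: "on_fund_cycle V E S i e \<Longrightarrow> S \<subseteq> T \<Longrightarrow> on_fund_cycle V E T i e"
  unfolding on_fund_cycle_def by blast

locale pisetting = gsetting +
  fixes \<pi> :: "'a set set"
  assumes piB: "\<pi> \<in> NBC V E rk"
begin

abbreviation "N \<equiv> nabla V E \<pi>"

definition X where "X = {\<sigma> \<in> NBC V E rk. \<pi> \<subseteq> \<sigma>}"

definition P where
  "P \<sigma> e \<longleftrightarrow> (e \<notin> \<sigma> \<and> insert e \<sigma> \<in> NBC V E rk) \<or>
     (e \<in> \<sigma> \<and> (\<forall>i\<in>N. rk i < rk e \<longrightarrow> i \<notin> \<sigma> \<longrightarrow> \<not> on_fund_cycle V E \<sigma> i e))"

lemma N_E: "N \<subseteq> E" by (auto simp: nabla_def)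

lemma finN: "finite N" using N_E finE finite_subset by blast

lemma N_nl: "e \<in> N \<Longrightarrow> \<not> linked \<pi> e" using in_nabla N_E by blast

lemma N_notpi: "e \<in> N \<Longrightarrow> e \<notin> \<pi>" using N_nl linked_mem by blast

lemma X_NBC: "\<sigma> \<in> X \<Longrightarrow> \<sigma> \<in> NBC V E rk" and X_pi: "\<sigma> \<in> X \<Longrightarrow> \<pi> \<subseteq> \<sigma>"
  by (auto simp: X_def)

lemma X_E: "\<sigma> \<in> X \<Longrightarrow> \<sigma> \<subseteq> E" using X_NBC NBC_sub by blast

lemma claim:
  "\<sigma> \<in> X \<Longrightarrow> e \<in> N \<Longrightarrow> e \<notin> \<sigma> \<Longrightarrow>
   (\<forall>e'\<in>N. rk e' \<le> rk e \<longrightarrow> e' \<notin> \<sigma> \<longrightarrow> insert e' \<sigma> \<notin> NBC V E rk) \<Longrightarrow> linked \<sigma> e"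
proof (induction "rk e" arbitrary: e rule: less_induct)
  case less
  show ?case
  proof (rule ccontr)
    assume nl: "\<not> linked \<sigma> e"
    have eE: "e \<in> E" using less.prems(2) N_E by blast
    have nB: "insert e \<sigma> \<notin> NBC V E rk" using less.prems(2,3,4) by blast
    obtain m where m: "m \<in> E" "rk m < rk e" "\<not> linked \<sigma> m"
      using extend_fail[OF X_NBC[OF less.prems(1)] eE nl nB] by blast
    have "\<not> linked \<pi> m" using m(3) linked_mono X_pi[OF less.prems(1)] by blast
    hence mN: "m \<in> N" using in_nabla m(1) by blast
    have m\<sigma>: "m \<notin> \<sigma>" using m(3) linked_mem by blast
    have hyp: "\<forall>e'\<in>N. rk e' \<le> rk m \<longrightarrow> e' \<notin> \<sigma> \<longrightarrow> insert e' \<sigma> \<notin> NBC V E rk"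
      using less.prems(4) m(2) by auto
    have "linked \<sigma> m" using less.hyps[OF m(2) less.prems(1) mN m\<sigma> hyp] .
    thus False using m(3) by simp
  qed
qed

lemma claim':
  assumes "\<sigma> \<in> X" "e \<in> N" "e \<notin> \<sigma>" "rk e < rk k" "\<forall>e\<in>N. rk e < rk k \<longrightarrow> \<not> P \<sigma> e"
  shows "linked \<sigma> e"
proof (rule claim[OF assms(1-3)])
  show "\<forall>e'\<in>N. rk e' \<le> rk e \<longrightarrow> e' \<notin> \<sigma> \<longrightarrow> insert e' \<sigma> \<notin> NBC V E rk"
    using assms(4,5) unfolding P_def by auto
qed

lemma caseA:
  assumes sX: "\<sigma> \<in> X" and kN: "k \<in> N" and k\<sigma>: "k \<notin> \<sigma>" and kB: "insert k \<sigma> \<in> NBC V E rk"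
    and H: "\<forall>e\<in>N. rk e < rk k \<longrightarrow> \<not> P \<sigma> e"
  shows "P (insert k \<sigma>) k \<and> (\<forall>e\<in>N. rk e < rk k \<longrightarrow> \<not> P (insert k \<sigma>) e)"
proof
  let ?\<tau> = "insert k \<sigma>"
  have kE: "k \<in> E" using kN N_E by blast
  have \<sigma>E: "\<sigma> \<subseteq> E" using X_E[OF sX] .
  have "\<forall>i\<in>N. rk i < rk k \<longrightarrow> i \<notin> ?\<tau> \<longrightarrow> \<not> on_fund_cycle V E ?\<tau> i k"
  proof (intro ballI impI notI)
    fix i assume iN: "i \<in> N" and ik: "rk i < rk k" and i\<tau>: "i \<notin> ?\<tau>"
      and ofc: "on_fund_cycle V E ?\<tau> i k"
    obtain C where C: "is_cycle V E C" "C \<subseteq> ?\<tau> \<union> {i}" "k \<in> C"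
      using ofc unfolding on_fund_cycle_def by blast
    have li: "linked \<sigma> i" using claim'[OF sX iN _ ik H] i\<tau> by simp
    have "linked (C - {k}) k" by (rule cycle_linked[OF C(1,3)])
    moreover have "C - {k} \<subseteq> insert i \<sigma>" using C(2) by auto
    ultimately have "linked (insert i \<sigma>) k" by (rule linked_mono)
    hence "linked \<sigma> k" using linked_insert[OF li] unfolding linked_def by simp
    then obtain C' where "is_cycle V E C'" "C' \<subseteq> ?\<tau>"
      using path_cycle[OF \<sigma>E kE k\<sigma>] by blast
    thus False using cycle_notNBC kB by blast
  qed
  thus "P ?\<tau> k" unfolding P_def by simp
next
  let ?\<tau> = "insert k \<sigma>"
  show "\<forall>e\<in>N. rk e < rk k \<longrightarrow> \<not> P ?\<tau> e"
  proof (intro ballI impI)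
    fix e assume eN: "e \<in> N" and ek: "rk e < rk k"
    have ne: "e \<noteq> k" using ek by auto
    have nP: "\<not> P \<sigma> e" using H eN ek by blast
    show "\<not> P ?\<tau> e"
    proof (cases "e \<in> \<sigma>")
      case True
      then obtain i where i: "i \<in> N" "rk i < rk e" "i \<notin> \<sigma>" "on_fund_cycle V E \<sigma> i e"
        using nP unfolding P_def by blast
      have "i \<noteq> k" using i(2) ek by auto
      hence "i \<notin> ?\<tau>" using i(3) by simp
      moreover have "on_fund_cycle V E ?\<tau> i e" using ofc_mono[OF i(4)] by blast
      ultimately show ?thesis using i(1,2) True unfolding P_def by auto
    next
      case False
      have "insert e \<sigma> \<notin> NBC V E rk" using nP False unfolding P_def by blast
      hence "insert e ?\<tau> \<notin> NBC V E rk" using NBC_mono[of "insert e ?\<tau>" "insert e \<sigma>"] by blast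
      thus ?thesis using False ne unfolding P_def by auto
    qed
  qed
qed

lemma caseB:
  assumes sX: "\<sigma> \<in> X" and kN: "k \<in> N" and k\<sigma>: "k \<in> \<sigma>"
    and K: "\<forall>i\<in>N. rk i < rk k \<longrightarrow> i \<notin> \<sigma> \<longrightarrow> \<not> on_fund_cycle V E \<sigma> i k"
    and H: "\<forall>e\<in>N. rk e < rk k \<longrightarrow> \<not> P \<sigma> e"
  shows "P (\<sigma> - {k}) k \<and> (\<forall>e\<in>N. rk e < rk k \<longrightarrow> \<not> P (\<sigma> - {k}) e)"
proof
  let ?\<tau> = "\<sigma> - {k}"
  have "insert k ?\<tau> = \<sigma>" using k\<sigma> by auto
  thus "P ?\<tau> k" using X_NBC[OF sX] unfolding P_def by simp
next
  let ?\<tau> = "\<sigma> - {k}"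
  have \<sigma>E: "\<sigma> \<subseteq> E" using X_E[OF sX] .
  show "\<forall>e\<in>N. rk e < rk k \<longrightarrow> \<not> P ?\<tau> e"
  proof (intro ballI impI)
    fix e assume eN: "e \<in> N" and ek: "rk e < rk k"
    have ne: "e \<noteq> k" using ek by auto
    have nP: "\<not> P \<sigma> e" using H eN ek by blast
    show "\<not> P ?\<tau> e"
    proof (cases "e \<in> \<sigma>")
      case True
      then obtain i where i: "i \<in> N" "rk i < rk e" "i \<notin> \<sigma>" "on_fund_cycle V E \<sigma> i e"
        using nP unfolding P_def by blast
      obtain C where C: "is_cycle V E C" "C \<subseteq> \<sigma> \<union> {i}" "e \<in> C"
        using i(4) unfolding on_fund_cycle_def by blast
      have "k \<notin> C"
      proof
        assume "k \<in> C"
        hence "on_fund_cycle V E \<sigma> i k" using C unfolding on_fund_cycle_def by blast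
        thus False using K i(1,2,3) ek by auto
      qed
      hence "on_fund_cycle V E ?\<tau> i e" using C unfolding on_fund_cycle_def by blast
      moreover have "i \<notin> ?\<tau>" using i(3) by simp
      ultimately show ?thesis using i(1,2) True ne unfolding P_def by auto
    next
      case False
      have eE: "e \<in> E" using eN N_E by blast
      have le: "linked \<sigma> e" using claim'[OF sX eN False ek H] .
      obtain C where C: "is_cycle V E C" "C \<subseteq> insert e \<sigma>" "e \<in> C"
        using path_cycle[OF \<sigma>E eE False le] by blast
      have "k \<notin> C"
      proof
        assume "k \<in> C"
        hence "on_fund_cycle V E \<sigma> e k" using C unfolding on_fund_cycle_def by blast
        thus False using K eN ek False by auto
      qed
      hence "C \<subseteq> insert e ?\<tau>" using C(2) by auto
      hence "insert e ?\<tau> \<notin> NBC V E rk" using cycle_notNBC C(1) by blast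
      thus ?thesis using False unfolding P_def by auto
    qed
  qed
qed

definition tog where "tog \<sigma> k = (if k \<in> \<sigma> then \<sigma> - {k} else insert k \<sigma>)"

lemma parity_insert:
  assumes "S \<subseteq> E" "k \<in> E" "\<not> linked S k"
  shows "(-1::int) ^ ncomp V S = - ((-1) ^ ncomp V (insert k S))"
proof -
  obtain u v where uv: "k = {u, v}" "u \<noteq> v" "u \<in> V" "v \<in> V" using edge_obtain[OF assms(2)] .
  have "(u, v) \<notin> (rel S)\<^sup>*" using assms(3) uv by (simp add: linked_iff)
  hence "ncomp V S = Suc (ncomp V (insert k S))" using ncomp_insert[OF finV uv(3,4)] uv(1) by simp
  thus ?thesis by simp
qed

lemma step:
  assumes sX: "\<sigma> \<in> X" and kN: "k \<in> N" and Pk: "P \<sigma> k" and H: "\<forall>e\<in>N. rk e < rk k \<longrightarrow> \<not> P \<sigma> e"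
  shows "tog \<sigma> k \<in> X \<and> P (tog \<sigma> k) k \<and> (\<forall>e\<in>N. rk e < rk k \<longrightarrow> \<not> P (tog \<sigma> k) e)
    \<and> (-1::int) ^ ncomp V (tog \<sigma> k) = - ((-1) ^ ncomp V \<sigma>) \<and> tog (tog \<sigma> k) k = \<sigma>"
proof (cases "k \<in> \<sigma>")
  case True
  let ?\<tau> = "\<sigma> - {k}"
  have K: "\<forall>i\<in>N. rk i < rk k \<longrightarrow> i \<notin> \<sigma> \<longrightarrow> \<not> on_fund_cycle V E \<sigma> i k"
    using Pk True unfolding P_def by blast
  have tX: "?\<tau> \<in> X" using sX NBC_mono N_notpi[OF kN] unfolding X_def by auto
  have ins: "insert k ?\<tau> = \<sigma>" using True by auto
  have kE: "k \<in> E" using kN N_E by blast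
  have \<tau>E: "?\<tau> \<subseteq> E" using X_E[OF tX] .
  have nl: "\<not> linked ?\<tau> k"
  proof
    assume "linked ?\<tau> k"
    then obtain C where "is_cycle V E C" "C \<subseteq> insert k ?\<tau>" using path_cycle[OF \<tau>E kE] by blast
    thus False using cycle_notNBC X_NBC[OF sX] ins by auto
  qed
  have par: "(-1::int) ^ ncomp V ?\<tau> = - ((-1) ^ ncomp V \<sigma>)"
    using parity_insert[OF \<tau>E kE nl] ins by simp
  show ?thesis using caseB[OF sX kN True K H] tX par True unfolding tog_def by (simp add: ins insert_absorb)
next
  case False
  let ?\<tau> = "insert k \<sigma>"
  have kB: "?\<tau> \<in> NBC V E rk" using Pk False unfolding P_def by blast
  have tX: "?\<tau> \<in> X" using kB X_pi[OF sX] unfolding X_def by auto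
  have kE: "k \<in> E" using kN N_E by blast
  have \<sigma>E: "\<sigma> \<subseteq> E" using X_E[OF sX] .
  have nl: "\<not> linked \<sigma> k"
  proof
    assume "linked \<sigma> k"
    then obtain C where "is_cycle V E C" "C \<subseteq> ?\<tau>" using path_cycle[OF \<sigma>E kE False] by blast
    thus False using cycle_notNBC kB by auto
  qed
  have par: "(-1::int) ^ ncomp V ?\<tau> = - ((-1) ^ ncomp V \<sigma>)"
    using parity_insert[OF \<sigma>E kE nl] by simp
  show ?thesis using caseA[OF sX kN False kB H] tX par False unfolding tog_def by simp
qed

end



context pisetting
begin

lemma fix_linked:
  assumes sX: "\<sigma> \<in> X" and F: "\<forall>e\<in>N. \<not> P \<sigma> e" and eE: "e \<in> E"
  shows "linked \<sigma> e"
proof (cases "e \<in> N")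
  case True
  show ?thesis
  proof (cases "e \<in> \<sigma>")
    case True thus ?thesis by (rule linked_mem)
  next
    case False
    show ?thesis
    proof (rule claim[OF sX \<open>e \<in> N\<close> False])
      show "\<forall>e'\<in>N. rk e' \<le> rk e \<longrightarrow> e' \<notin> \<sigma> \<longrightarrow> insert e' \<sigma> \<notin> NBC V E rk"
        using F unfolding P_def by auto
    qed
  qed
next
  case False
  hence "linked \<pi> e" using in_nabla eE by blast
  thus ?thesis using linked_mono X_pi[OF sX] by blast
qed

lemma fix_ncomp:
  assumes sX: "\<sigma> \<in> X" and F: "\<forall>e\<in>N. \<not> P \<sigma> e"
  shows "ncomp V \<sigma> = ncomp V E"
proof -
  have "(rel \<sigma>)\<^sup>* = (rel E)\<^sup>*"
  proof (rule equalityI)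
    show "(rel \<sigma>)\<^sup>* \<subseteq> (rel E)\<^sup>*" using X_E[OF sX] by (rule rel_mono)
  next
    have "rel E \<subseteq> (rel \<sigma>)\<^sup>*"
    proof
      fix p assume "p \<in> rel E"
      then obtain x y where p: "p = (x, y)" "{x, y} \<in> E" by (auto simp: rel_def)
      have "linked \<sigma> {x, y}" using fix_linked[OF sX F p(2)] .
      thus "p \<in> (rel \<sigma>)\<^sup>*" using p by (simp add: linked_iff)
    qed
    hence "(rel E)\<^sup>* \<subseteq> ((rel \<sigma>)\<^sup>*)\<^sup>*" by (rule rtrancl_mono)
    thus "(rel E)\<^sup>* \<subseteq> (rel \<sigma>)\<^sup>*" by simp
  qed
  hence "conn V \<sigma> = conn V E" by (simp add: conn_rel)
  thus ?thesis by (simp add: ncomp_def)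
qed

lemma max_iff:
  assumes sX: "\<sigma> \<in> X"
  shows "max_NBC_above V E rk \<pi> \<sigma> \<longleftrightarrow> (\<forall>e\<in>N. e \<notin> \<sigma> \<longrightarrow> insert e \<sigma> \<notin> NBC V E rk)"
proof
  assume M: "max_NBC_above V E rk \<pi> \<sigma>"
  show "\<forall>e\<in>N. e \<notin> \<sigma> \<longrightarrow> insert e \<sigma> \<notin> NBC V E rk"
  proof (intro ballI impI notI)
    fix e assume "e \<in> N" "e \<notin> \<sigma>" "insert e \<sigma> \<in> NBC V E rk"
    moreover have "\<pi> \<subseteq> insert e \<sigma>" using X_pi[OF sX] by auto
    ultimately show False using M unfolding max_NBC_above_def by blast
  qed
next
  assume R: "\<forall>e\<in>N. e \<notin> \<sigma> \<longrightarrow> insert e \<sigma> \<notin> NBC V E rk"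
  have "\<forall>T'. T' \<in> NBC V E rk \<and> \<pi> \<subseteq> T' \<and> \<sigma> \<subseteq> T' \<longrightarrow> T' = \<sigma>"
  proof (intro allI impI)
    fix T' assume T': "T' \<in> NBC V E rk \<and> \<pi> \<subseteq> T' \<and> \<sigma> \<subseteq> T'"
    show "T' = \<sigma>"
    proof (rule ccontr)
      assume "T' \<noteq> \<sigma>"
      then obtain e where e: "e \<in> T'" "e \<notin> \<sigma>" using T' by blast
      have eE: "e \<in> E" using e(1) T' NBC_sub by blast
      have iB: "insert e \<sigma> \<in> NBC V E rk" using NBC_mono[of T' "insert e \<sigma>"] T' e by blast
      show False
      proof (cases "e \<in> N")
        case True thus False using R e iB by blast
      next
        case False
        hence "linked \<pi> e" using in_nabla eE by blast
        hence "linked \<sigma> e" using linked_mono X_pi[OF sX] by blast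
        then obtain C where "is_cycle V E C" "C \<subseteq> insert e \<sigma>"
          using path_cycle[OF X_E[OF sX] eE e(2)] by blast
        thus False using cycle_notNBC iB by blast
      qed
    qed
  qed
  thus "max_NBC_above V E rk \<pi> \<sigma>" using sX unfolding max_NBC_above_def X_def by blast
qed

lemma good_iff:
  "good_T V E rk \<pi> \<sigma> \<longleftrightarrow> (\<forall>e\<in>N. e \<in> \<sigma> \<longrightarrow> (\<exists>i\<in>N. rk i < rk e \<and> i \<notin> \<sigma> \<and> on_fund_cycle V E \<sigma> i e))"
proof (cases "N = {}")
  case True thus ?thesis by (simp add: good_T_def)
next
  case False
  define m where "m = min_edge rk N"
  have m: "m \<in> N" "\<forall>f\<in>N. rk m \<le> rk f" using min_edge_prop[OF finN False N_E] m_def by auto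
  show ?thesis
  proof
    assume G: "good_T V E rk \<pi> \<sigma>"
    hence m\<sigma>: "m \<notin> \<sigma>" using False m_def unfolding good_T_def by blast
    show "\<forall>e\<in>N. e \<in> \<sigma> \<longrightarrow> (\<exists>i\<in>N. rk i < rk e \<and> i \<notin> \<sigma> \<and> on_fund_cycle V E \<sigma> i e)"
    proof (intro ballI impI)
      fix e assume "e \<in> N" "e \<in> \<sigma>"
      moreover hence "e \<noteq> m" using m\<sigma> by auto
      ultimately show "\<exists>i\<in>N. rk i < rk e \<and> i \<notin> \<sigma> \<and> on_fund_cycle V E \<sigma> i e"
        using G m_def unfolding good_T_def by blast
    qed
  next
    assume R: "\<forall>e\<in>N. e \<in> \<sigma> \<longrightarrow> (\<exists>i\<in>N. rk i < rk e \<and> i \<notin> \<sigma> \<and> on_fund_cycle V E \<sigma> i e)"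
    have "m \<notin> \<sigma>"
    proof
      assume "m \<in> \<sigma>"
      then obtain i where "i \<in> N" "rk i < rk m" using R m(1) by blast
      thus False using m(2) by auto
    qed
    thus "good_T V E rk \<pi> \<sigma>" using R unfolding good_T_def m_def by blast
  qed
qed

lemma fix_iff:
  assumes sX: "\<sigma> \<in> X"
  shows "(\<forall>e\<in>N. \<not> P \<sigma> e) \<longleftrightarrow> max_NBC_above V E rk \<pi> \<sigma> \<and> good_T V E rk \<pi> \<sigma>"
proof -
  have "\<And>e. \<not> P \<sigma> e \<longleftrightarrow> (e \<notin> \<sigma> \<longrightarrow> insert e \<sigma> \<notin> NBC V E rk) \<and>
     (e \<in> \<sigma> \<longrightarrow> (\<exists>i\<in>N. rk i < rk e \<and> i \<notin> \<sigma> \<and> on_fund_cycle V E \<sigma> i e))"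
    unfolding P_def by auto
  thus ?thesis unfolding max_iff[OF sX] good_iff by auto
qed

lemma main:
  "(\<Sum>\<sigma>\<in>X. (-1::int) ^ ncomp V \<sigma>)
     = (-1::int) ^ ncomp V E * int (card {T. max_NBC_above V E rk \<pi> T \<and> good_T V E rk \<pi> T})"
proof -
  define f where "f \<sigma> = (-1::int) ^ ncomp V \<sigma>" for \<sigma>
  define F where "F = {\<sigma> \<in> X. \<forall>e\<in>N. \<not> P \<sigma> e}"
  define \<iota> where "\<iota> \<sigma> = tog \<sigma> (min_edge rk {e \<in> N. P \<sigma> e})" for \<sigma>
  have finX: "finite X"
  proof -
    have "X \<subseteq> Pow E" using X_E by auto
    thus ?thesis using finE by (meson finite_Pow_iff finite_subset)
  qed
  have FX: "F \<subseteq> X" by (auto simp: F_def)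
  have split: "sum f X = sum f (X - F) + sum f F" using sum.subset_diff[OF FX finX] .
  have F_eq: "F = {T. max_NBC_above V E rk \<pi> T \<and> good_T V E rk \<pi> T}"
  proof (rule set_eqI)
    fix T
    show "T \<in> F \<longleftrightarrow> T \<in> {T. max_NBC_above V E rk \<pi> T \<and> good_T V E rk \<pi> T}"
    proof
      assume "T \<in> F" thus "T \<in> {T. max_NBC_above V E rk \<pi> T \<and> good_T V E rk \<pi> T}"
        using fix_iff unfolding F_def by auto
    next
      assume T: "T \<in> {T. max_NBC_above V E rk \<pi> T \<and> good_T V E rk \<pi> T}"
      hence TX: "T \<in> X" unfolding max_NBC_above_def X_def by auto
      thus "T \<in> F" using fix_iff[OF TX] T unfolding F_def by auto
    qed
  qed
  have sumF: "sum f F = of_nat (card F) * (-1::int) ^ ncomp V E"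
  proof -
    have "sum f F = sum (\<lambda>_. (-1::int) ^ ncomp V E) F"
      by (rule sum.cong) (auto simp: f_def F_def fix_ncomp)
    thus ?thesis by simp
  qed
  have inv: "\<iota> \<sigma> \<in> X - F \<and> \<iota> (\<iota> \<sigma>) = \<sigma> \<and> f (\<iota> \<sigma>) = - f \<sigma>" if s: "\<sigma> \<in> X - F" for \<sigma>
  proof -
    have sX: "\<sigma> \<in> X" using s by simp
    let ?K = "{e \<in> N. P \<sigma> e}"
    have Kne: "?K \<noteq> {}" using s unfolding F_def by auto
    have finK: "finite ?K" using finN by simp
    have KE: "?K \<subseteq> E" using N_E by auto
    define k where "k = min_edge rk ?K"
    have k: "k \<in> N" "P \<sigma> k" "\<forall>e\<in>?K. rk k \<le> rk e" using min_edge_prop[OF finK Kne KE] k_def by auto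
    have H: "\<forall>e\<in>N. rk e < rk k \<longrightarrow> \<not> P \<sigma> e"
    proof (intro ballI impI notI)
      fix e assume "e \<in> N" "rk e < rk k" "P \<sigma> e"
      hence "e \<in> ?K" by simp
      hence "rk k \<le> rk e" using k(3) by blast
      thus False using \<open>rk e < rk k\<close> by simp
    qed
    have st: "tog \<sigma> k \<in> X \<and> P (tog \<sigma> k) k \<and> (\<forall>e\<in>N. rk e < rk k \<longrightarrow> \<not> P (tog \<sigma> k) e)
      \<and> (-1::int) ^ ncomp V (tog \<sigma> k) = - ((-1) ^ ncomp V \<sigma>) \<and> tog (tog \<sigma> k) k = \<sigma>"
      using step[OF sX k(1,2) H] .
    have i1: "\<iota> \<sigma> = tog \<sigma> k" by (simp add: \<iota>_def k_def)
    have "min_edge rk {e \<in> N. P (tog \<sigma> k) e} = k"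
    proof (rule min_edge_eq)
      show "k \<in> {e \<in> N. P (tog \<sigma> k) e}" using st k(1) by simp
      show "\<forall>f\<in>{e \<in> N. P (tog \<sigma> k) e}. rk k \<le> rk f"
      proof
        fix f assume "f \<in> {e \<in> N. P (tog \<sigma> k) e}"
        hence f: "f \<in> N" "P (tog \<sigma> k) f" by auto
        show "rk k \<le> rk f"
        proof (rule ccontr)
          assume "\<not> rk k \<le> rk f"
          hence "rk f < rk k" by simp
          thus False using st f by blast
        qed
      qed
      show "{e \<in> N. P (tog \<sigma> k) e} \<subseteq> E" using N_E by auto
    qed
    hence i2: "\<iota> (tog \<sigma> k) = tog (tog \<sigma> k) k" by (simp add: \<iota>_def)
    have "tog \<sigma> k \<notin> F" using st k(1) unfolding F_def by blast
    thus ?thesis using st i1 i2 unfolding f_def by simp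
  qed
  have inv1: "\<And>\<sigma>. \<sigma> \<in> X - F \<Longrightarrow> \<iota> \<sigma> \<in> X - F" using inv by blast
  have inv2: "\<And>\<sigma>. \<sigma> \<in> X - F \<Longrightarrow> \<iota> (\<iota> \<sigma>) = \<sigma>" using inv by blast
  have inv3: "\<And>\<sigma>. \<sigma> \<in> X - F \<Longrightarrow> f (\<iota> \<sigma>) = - f \<sigma>" using inv by blast
  have "sum (\<lambda>\<sigma>. f (\<iota> \<sigma>)) (X - F) = sum f (X - F)"
    by (rule sum.reindex_bij_witness[of _ \<iota> \<iota>]) (use inv1 inv2 in blast)+
  moreover have "sum (\<lambda>\<sigma>. f (\<iota> \<sigma>)) (X - F) = sum (\<lambda>\<sigma>. - f \<sigma>) (X - F)"
    by (rule sum.cong) (simp_all add: inv3)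
  moreover have "sum (\<lambda>\<sigma>. - f \<sigma>) (X - F) = - sum f (X - F)" by (simp add: sum_negf)
  ultimately have "sum f (X - F) = 0" by simp
  hence "sum f X = of_nat (card F) * (-1::int) ^ ncomp V E" using split sumF by simp
  thus ?thesis using F_eq unfolding f_def by (simp add: mult.commute)
qed

end


theorem lemma3p4:
  fixes V :: "'a set" and E :: "'a set set" and rk :: "'a set \<Rightarrow> nat" and \<pi> :: "'a set set"
  assumes "simple_graph V E"
    and "edge_order E rk"
    and "\<pi> \<in> NBC V E rk"
  shows "(\<Sum>\<sigma> \<in> {\<sigma> \<in> NBC V E rk. \<pi> \<subseteq> \<sigma>}. (-1::int) ^ ncomp V \<sigma>)
         = (-1::int) ^ ncomp V E * int (card {T. max_NBC_above V E rk \<pi> T \<and> good_T V E rk \<pi> T})"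
proof -
  interpret pisetting V E rk \<pi>
    using assms by unfold_locales (auto simp: edge_order_def)
  show ?thesis using main by (simp add: X_def)
qed

end
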